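(* Let $k$ be an algebraically closed field of characteristic zero, let $\mathbb{T}^2=\operatorname{Spec}k[x^{\pm1},y^{\pm1}]$ and $\omega=\frac{dx}{x}\wedge\frac{dy}{y}$. Then: (1) the Lie subalgebra of $\mathrm{Vec}(\mathbb{T}^2)$ generated by all locally nilpotent vector fields is zero, and so is the one generated by the Hamiltonian locally nilpotent vector fields; (2) $\mathcal{H}_\omega(\mathbb{T}^2)$ is a proper Lie ideal of codimension $2$ of $\mathrm{VP}_\omega(\mathbb{T}^2)$; (3) $\mathcal{E}_\omega(\mathbb{T}^2)=[\mathcal{H}_\omega(\mathbb{T}^2),\mathcal{H}_\omega(\mathbb{T}^2)]=\mathcal{H}_\omega(\mathbb{T}^2)$, and this is a simple Lie algebra of bracket width one.
   Context: For a smooth affine surface $S$ with nowhere vanishing $2$-form $\omega$: $\mathrm{Div}_\omega\xi\in\mathcal{O}(S)$ is defined by $d(i_\xi\omega)=(\mathrm{Div}_\omega\xi)\omega$; $\mathrm{VP}_\omega(S)=\{\xi\in\mathrm{Vec}(S):\mathrm{Div}_\omega\xi=0\}$ (symplectic vector fields, i.e. $i_\xi\omega$ closed). For $f\in\mathcal{O}(S)$, $\theta_f$ is the unique vector field with $i_{\theta_f}\omega=df$; $\mathcal{H}_\omega(S)=\{\theta_f: f\in\mathcal{O}(S)\}$ (Hamiltonian vector fields, i.e. those $\xi$ with $i_\xi\omega$ exact). $E_\omega(S)=\mathrm{Div}_\omega(\mathrm{Vec}(S))\subseteq\mathcal{O}(S)$ and $\mathcal{E}_\omega(S)=\{\theta_f: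 f\in E_\omega(S)\}$. A vector field is locally nilpotent if the corresponding derivation $\partial$ of $\mathcal{O}(S)$ satisfies: for every $f$ some power $\partial^s f=0$. The bracket width of a Lie algebra $L$ is the supremum over $a\in[L,L]$ of the smallest number of brackets of elements of $L$ summing to $a$. *)

theory Defs
  imports "HOL-Computational_Algebra.Polynomial" "HOL-Library.Poly_Mapping"
    "HOL-Library.Product_Plus" "HOL-Library.Extended_Nat"
begin

text \<open>Coordinate ring of the torus: Laurent polynomials k[x^{+-1},y^{+-1}],
  as finitely supported functions from exponent pairs (i,j) in Z x Z to k
  (the monomial x^i y^j), with convolution product.\<close>
type_synonym 'k laurent = "(int \<times> int) \<Rightarrow>\<^sub>0 'k"

definition cst :: "'k::comm_ring_1 \<Rightarrow> 'k laurent" where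
  "cst c = Poly_Mapping.single (0,0) c"

definition X :: "'k::comm_ring_1 laurent" where "X = Poly_Mapping.single (1,0) 1"
definition Y :: "'k::comm_ring_1 laurent" where "Y = Poly_Mapping.single (0,1) 1"
definition Xinv :: "'k::comm_ring_1 laurent" where "Xinv = Poly_Mapping.single (-1,0) 1"
definition Yinv :: "'k::comm_ring_1 laurent" where "Yinv = Poly_Mapping.single (0,-1) 1"

text \<open>Vector fields on an affine variety = k-derivations of its coordinate ring.\<close>
definition is_derivation :: "('k::comm_ring_1 laurent \<Rightarrow> 'k laurent) \<Rightarrow> bool" where
  "is_derivation D \<longleftrightarrow>
     (\<forall>f g. D (f + g) = D f + D g) \<and>
     (\<forall>c f. D (cst c * f) = cst c * D f) \<and>
     (\<forall>f g. D (f * g) = f * D g + g * D f)"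

definition Vec :: "('k::comm_ring_1 laurent \<Rightarrow> 'k laurent) set" where
  "Vec = {D. is_derivation D}"

definition lie :: "('k::comm_ring_1 laurent \<Rightarrow> 'k laurent) \<Rightarrow> ('k laurent \<Rightarrow> 'k laurent) \<Rightarrow> ('k laurent \<Rightarrow> 'k laurent)" where
  "lie D E = (\<lambda>f. D (E f) - E (D f))"

definition zerovf :: "'k::comm_ring_1 laurent \<Rightarrow> 'k laurent" where
  "zerovf = (\<lambda>f. 0)"

definition locally_nilpotent :: "('k::comm_ring_1 laurent \<Rightarrow> 'k laurent) \<Rightarrow> bool" where
  "locally_nilpotent D \<longleftrightarrow> (\<forall>f. \<exists>s. (D ^^ s) f = 0)"

text \<open>The Euler derivations x d/dx and y d/dy.\<close>
definition delta1 :: "'k::comm_ring_1 laurent \<Rightarrow> 'k laurent" where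
  "delta1 f = Poly_Mapping.mapp (\<lambda>(i,j) c. of_int i * c) f"
definition delta2 :: "'k::comm_ring_1 laurent \<Rightarrow> 'k laurent" where
  "delta2 f = Poly_Mapping.mapp (\<lambda>(i,j) c. of_int j * c) f"

text \<open>omega = dx/x wedge dy/y.  Writing xi = a x d/dx + b y d/dy (a = xi(x)/x, b = xi(y)/y),
  i_xi omega = a dy/y - b dx/x, hence d(i_xi omega) = (x a_x + y b_y) omega.\<close>
definition Div :: "('k::comm_ring_1 laurent \<Rightarrow> 'k laurent) \<Rightarrow> 'k laurent" where
  "Div xi = delta1 (xi X * Xinv) + delta2 (xi Y * Yinv)"

text \<open>theta_f with i_{theta_f} omega = df, i.e. theta_f = f_y' x d/dx - f_x' y d/dy
  where f_x' = x df/dx, f_y' = y df/dy.\<close>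
definition theta :: "'k::comm_ring_1 laurent \<Rightarrow> ('k laurent \<Rightarrow> 'k laurent)" where
  "theta f = (\<lambda>g. delta2 f * delta1 g - delta1 f * delta2 g)"

definition VP :: "('k::comm_ring_1 laurent \<Rightarrow> 'k laurent) set" where
  "VP = {xi \<in> Vec. Div xi = 0}"

definition Ham :: "('k::comm_ring_1 laurent \<Rightarrow> 'k laurent) set" where
  "Ham = theta ` UNIV"

definition Eom :: "('k::comm_ring_1 laurent \<Rightarrow> 'k laurent) set" where
  "Eom = theta ` (Div ` Vec)"

definition vsubspace :: "('k::comm_ring_1 laurent \<Rightarrow> 'k laurent) set \<Rightarrow> bool" where
  "vsubspace S \<longleftrightarrow> zerovf \<in> S \<and> (\<forall>a\<in>S. \<forall>b\<in>S. (\<lambda>f. a f + b f) \<in> S) \<and>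
     (\<forall>c. \<forall>a\<in>S. (\<lambda>f. cst c * a f) \<in> S)"

definition lie_subalgebra :: "('k::comm_ring_1 laurent \<Rightarrow> 'k laurent) set \<Rightarrow> bool" where
  "lie_subalgebra S \<longleftrightarrow> vsubspace S \<and> (\<forall>a\<in>S. \<forall>b\<in>S. lie a b \<in> S)"

definition lie_generated :: "('k::comm_ring_1 laurent \<Rightarrow> 'k laurent) set \<Rightarrow> ('k laurent \<Rightarrow> 'k laurent) set" where
  "lie_generated S = \<Inter>{T. lie_subalgebra T \<and> S \<subseteq> T}"

definition lie_ideal :: "('k::comm_ring_1 laurent \<Rightarrow> 'k laurent) set \<Rightarrow> ('k laurent \<Rightarrow> 'k laurent) set \<Rightarrow> bool" where
  "lie_ideal I L \<longleftrightarrow> I \<subseteq> L \<and> vsubspace I \<and> (\<forall>a\<in>L. \<forall>b\<in>I. lie a b \<in> I)"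

definition bracket_span :: "('k::comm_ring_1 laurent \<Rightarrow> 'k laurent) set \<Rightarrow> ('k laurent \<Rightarrow> 'k laurent) set \<Rightarrow> ('k laurent \<Rightarrow> 'k laurent) set" where
  "bracket_span A B = \<Inter>{T. vsubspace T \<and> {lie a b |a b. a \<in> A \<and> b \<in> B} \<subseteq> T}"

definition codim_in :: "('k::comm_ring_1 laurent \<Rightarrow> 'k laurent) set \<Rightarrow> ('k laurent \<Rightarrow> 'k laurent) set \<Rightarrow> nat \<Rightarrow> bool" where
  "codim_in I L n \<longleftrightarrow> (\<exists>v::nat \<Rightarrow> ('k laurent \<Rightarrow> 'k laurent). (\<forall>i<n. v i \<in> L) \<and>
     (\<forall>xi\<in>L. \<exists>!c::nat \<Rightarrow> 'k. (\<forall>i\<ge>n. c i = 0) \<and>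
        (\<lambda>f. xi f - (\<Sum>i<n. cst (c i) * v i f)) \<in> I))"

definition simple_lie :: "('k::comm_ring_1 laurent \<Rightarrow> 'k laurent) set \<Rightarrow> bool" where
  "simple_lie L \<longleftrightarrow> lie_subalgebra L \<and> (\<exists>a\<in>L. \<exists>b\<in>L. lie a b \<noteq> zerovf) \<and>
     (\<forall>I. lie_ideal I L \<longrightarrow> I = {zerovf} \<or> I = L)"

definition nbrackets :: "('k::comm_ring_1 laurent \<Rightarrow> 'k laurent) set \<Rightarrow> ('k laurent \<Rightarrow> 'k laurent) \<Rightarrow> nat" where
  "nbrackets L a = (LEAST n. \<exists>u v :: nat \<Rightarrow> ('k laurent \<Rightarrow> 'k laurent).
      (\<forall>i<n. u i \<in> L \<and> v i \<in> L) \<and> a = (\<lambda>f. \<Sum>i<n. lie (u i) (v i) f))"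

definition bracket_width :: "('k::comm_ring_1 laurent \<Rightarrow> 'k laurent) set \<Rightarrow> enat" where
  "bracket_width L = (SUP a \<in> bracket_span L L. enat (nbrackets L a))"

end

theory Submission
  imports Defs "HOL-Library.Product_Lexorder"
begin

instance prod :: (ordered_cancel_ab_semigroup_add, ordered_cancel_ab_semigroup_add) ordered_cancel_ab_semigroup_add
proof
  fix a b c :: "'a \<times> 'b"
  assume "a \<le> b"
  then show "c + a \<le> c + b"
    by (cases a; cases b; cases c) (auto simp: add_strict_left_mono add_left_mono)
qed

instance prod :: (ordered_cancel_comm_monoid_add, ordered_cancel_comm_monoid_add) ordered_cancel_comm_monoid_add ..

definition mon :: "int \<times> int \<Rightarrow> 'k::comm_ring_1 laurent" where
  "mon a = Poly_Mapping.single a 1"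

definition pb :: "int \<times> int \<Rightarrow> int \<times> int \<Rightarrow> int" where
  "pb a b = snd a * fst b - fst a * snd b"

lemma laurent_expand: "(f::'k::comm_ring_1 laurent) = (\<Sum>k\<in>Poly_Mapping.keys f. Poly_Mapping.single k (Poly_Mapping.lookup f k))"
  by (rule poly_mapping_eqI) (simp add: lookup_sum lookup_single when_def in_keys_iff)

lemma laurent_induct[case_names zero add]:
  fixes f :: "'k::comm_ring_1 laurent"
  assumes "P 0" "\<And>k c f. P f \<Longrightarrow> P (Poly_Mapping.single k c + f)"
  shows "P f"
proof -
  have "finite S \<Longrightarrow> P (\<Sum>k\<in>S. Poly_Mapping.single k (Poly_Mapping.lookup f k))" for S
  proof (induct S rule: finite_induct)
    case empty then show ?case using assms by simp
  next
    case (insert x F) then show ?case using assms by simp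
  qed
  then show ?thesis by (subst laurent_expand) simp
qed

lemma lookup_single_mult:
  "Poly_Mapping.lookup (Poly_Mapping.single a c * (f::'k::comm_ring_1 laurent)) k = c * Poly_Mapping.lookup f (k - a)"
proof (induct f rule: laurent_induct)
  case zero then show ?case by simp
next
  case (add m d f)
  have "Poly_Mapping.lookup (Poly_Mapping.single a c * Poly_Mapping.single m d) k
        = c * Poly_Mapping.lookup (Poly_Mapping.single m d :: 'k laurent) (k - a)"
    by (auto simp: mult_single lookup_single when_def algebra_simps)
  then show ?case using add by (simp add: distrib_left lookup_add)
qed

lemma lookup_mult_single:
  "Poly_Mapping.lookup ((f::'k::comm_ring_1 laurent) * Poly_Mapping.single a c) k = c * Poly_Mapping.lookup f (k - a)"
  by (subst mult.commute) (rule lookup_single_mult)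

lemma cst_zero_key: "cst c = Poly_Mapping.single 0 c"
  by (simp add: cst_def zero_prod_def)

lemma lookup_cst_mult [simp]: "Poly_Mapping.lookup (cst c * (f::'k::comm_ring_1 laurent)) k = c * Poly_Mapping.lookup f k"
  by (simp add: cst_zero_key lookup_single_mult)

lemma lookup_mon_mult [simp]: "Poly_Mapping.lookup (mon a * (f::'k::comm_ring_1 laurent)) k = Poly_Mapping.lookup f (k - a)"
  by (simp add: mon_def lookup_single_mult)

lemma lookup_mon: "Poly_Mapping.lookup (mon a :: 'k::comm_ring_1 laurent) k = (if k = a then 1 else 0)"
  by (simp add: mon_def lookup_single)

lemma mon_mult: "mon a * mon b = (mon (a + b) :: 'k::comm_ring_1 laurent)"
  by (simp add: mon_def mult_single)

lemma mon_zero: "mon 0 = (1 :: 'k::comm_ring_1 laurent)"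
  by (simp add: mon_def)

lemma XY_mon: "X = mon (1,0)" "Y = mon (0,1)" "Xinv = mon (-1,0)" "Yinv = mon (0,-1)"
  by (simp_all add: X_def Y_def Xinv_def Yinv_def mon_def)

lemma X_Xinv: "X * Xinv = (1::'k::comm_ring_1 laurent)" "Y * Yinv = (1::'k::comm_ring_1 laurent)"
  by (simp_all add: XY_mon mon_mult zero_prod_def flip: mon_zero)

lemma cst_one: "cst 1 = 1" by (simp add: cst_zero_key)

lemma lookup_delta1 [simp]: "Poly_Mapping.lookup (delta1 f) k = of_int (fst k) * Poly_Mapping.lookup f k"
  by (cases k) (auto simp: delta1_def lookup_mapp when_def in_keys_iff)
lemma lookup_delta2 [simp]: "Poly_Mapping.lookup (delta2 f) k = of_int (snd k) * Poly_Mapping.lookup f k"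
  by (cases k) (auto simp: delta2_def lookup_mapp when_def in_keys_iff)

lemma delta1_add [simp]: "delta1 (f + g) = delta1 f + delta1 g"
  by (rule poly_mapping_eqI) (simp add: lookup_add algebra_simps)
lemma delta2_add [simp]: "delta2 (f + g) = delta2 f + delta2 g"
  by (rule poly_mapping_eqI) (simp add: lookup_add algebra_simps)
lemma delta1_diff [simp]: "delta1 (f - g) = delta1 f - delta1 g"
  by (rule poly_mapping_eqI) (simp add: lookup_minus algebra_simps)
lemma delta2_diff [simp]: "delta2 (f - g) = delta2 f - delta2 g"
  by (rule poly_mapping_eqI) (simp add: lookup_minus algebra_simps)
lemma delta1_uminus [simp]: "delta1 (- f) = - delta1 f"
  by (rule poly_mapping_eqI) simp
lemma delta2_uminus [simp]: "delta2 (- f) = - delta2 f"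
  by (rule poly_mapping_eqI) simp
lemma delta1_zero [simp]: "delta1 0 = 0"
  by (rule poly_mapping_eqI) simp
lemma delta2_zero [simp]: "delta2 0 = 0"
  by (rule poly_mapping_eqI) simp
lemma delta1_cst_mult [simp]: "delta1 (cst c * f) = cst c * delta1 f"
  by (rule poly_mapping_eqI) (simp add: mult.left_commute)
lemma delta2_cst_mult [simp]: "delta2 (cst c * f) = cst c * delta2 f"
  by (rule poly_mapping_eqI) (simp add: mult.left_commute)
lemma delta12 : "delta1 (delta2 f) = delta2 (delta1 f)"
  by (rule poly_mapping_eqI) (simp add: algebra_simps)
lemma delta1_cst [simp]: "delta1 (cst c) = 0"
  by (rule poly_mapping_eqI) (simp add: cst_zero_key lookup_single when_def)
lemma delta2_cst [simp]: "delta2 (cst c) = 0"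
  by (rule poly_mapping_eqI) (simp add: cst_zero_key lookup_single when_def)
lemma delta1_one [simp]: "delta1 1 = 0"
  using delta1_cst[of 1] by (simp add: cst_one)
lemma delta2_one [simp]: "delta2 1 = 0"
  using delta2_cst[of 1] by (simp add: cst_one)

lemma delta1_mon: "delta1 (mon a) = cst (of_int (fst a)) * mon a"
  by (rule poly_mapping_eqI) (simp add: lookup_mon)
lemma delta2_mon: "delta2 (mon a) = cst (of_int (snd a)) * mon a"
  by (rule poly_mapping_eqI) (simp add: lookup_mon)

lemma delta1_single: "delta1 (Poly_Mapping.single a c) = Poly_Mapping.single a (of_int (fst a) * c)"
  by (rule poly_mapping_eqI) (simp add: lookup_single when_def)
lemma delta2_single: "delta2 (Poly_Mapping.single a c) = Poly_Mapping.single a (of_int (snd a) * c)"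
  by (rule poly_mapping_eqI) (simp add: lookup_single when_def)

lemma delta1_mult [simp]: "delta1 (f * g) = f * delta1 g + g * delta1 (f::'k::comm_ring_1 laurent)"
proof (induct f rule: laurent_induct)
  case zero then show ?case by simp
next
  case (add a c f)
  have "delta1 (Poly_Mapping.single a c * g) = Poly_Mapping.single a c * delta1 g + g * delta1 (Poly_Mapping.single a c)"
    by (rule poly_mapping_eqI) (simp add: lookup_single_mult lookup_mult_single lookup_add lookup_single when_def delta1_single delta2_single algebra_simps)
  then show ?case using add by (simp add: algebra_simps)
qed

lemma delta2_mult [simp]: "delta2 (f * g) = f * delta2 g + g * delta2 (f::'k::comm_ring_1 laurent)"
proof (induct f rule: laurent_induct)
  case zero then show ?case by simp
next
  case (add a c f)
  have "delta2 (Poly_Mapping.single a c * g) = Poly_Mapping.single a c * delta2 g + g * delta2 (Poly_Mapping.single a c)"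
    by (rule poly_mapping_eqI) (simp add: lookup_single_mult lookup_mult_single lookup_add lookup_single when_def delta1_single delta2_single algebra_simps)
  then show ?case using add by (simp add: algebra_simps)
qed

lemma single_cst_mon: "Poly_Mapping.single a c = cst c * (mon a :: 'k::comm_ring_1 laurent)"
  by (rule poly_mapping_eqI) (simp add: lookup_single lookup_mon when_def)

context
  fixes D :: "'k::comm_ring_1 laurent \<Rightarrow> 'k laurent"
  assumes D: "is_derivation D"
begin

lemma der_add: "D (f + g) = D f + D g" using D unfolding is_derivation_def by blast
lemma der_cst_mult: "D (cst c * f) = cst c * D f" using D unfolding is_derivation_def by blast
lemma der_mult: "D (f * g) = f * D g + g * D f" using D unfolding is_derivation_def by blast
lemma der_zero: "D 0 = 0" using der_add[of 0 0] by simp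
lemma der_uminus: "D (- f) = - D f"
proof -
  have "D f + D (- f) = 0" using der_add[of f "- f"] by (simp add: der_zero)
  then show ?thesis by (simp add: eq_neg_iff_add_eq_0 add.commute)
qed
lemma der_diff: "D (f - g) = D f - D g" using der_add[of f "- g"] by (simp add: der_uminus)
lemma der_one: "D 1 = 0" using der_mult[of 1 1] by simp
lemma der_cst: "D (cst c) = 0"
proof -
  have "D (cst c * 1) = cst c * D 1" by (rule der_cst_mult)
  then show ?thesis by (simp add: der_one)
qed

lemma der_inv: assumes "u * v = 1" "D u = 0" shows "D v = 0"
proof -
  have "u * D v = 0" using der_mult[of u v] assms by (simp add: der_one)
  then have "v * (u * D v) = 0" by simp
  then show ?thesis using assms(1) by (simp add: mult.assoc[symmetric] mult.commute)
qed

lemma der_XY_zero: assumes "D X = 0" "D Y = 0" shows "D f = 0"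
proof -
  have Xi: "D Xinv = 0" using der_inv[OF X_Xinv(1) assms(1)] .
  have Yi: "D Yinv = 0" using der_inv[OF X_Xinv(2) assms(2)] .
  have m1: "D (mon (i, 0)) = 0" for i
  proof (induct i rule: int_induct[where k = 0])
    case base then show ?case by (simp add: der_one mon_def flip: zero_prod_def)
  next
    case (step1 i)
    have "(mon (i + 1, 0) :: 'k laurent) = mon (i, 0) * X" by (simp add: XY_mon mon_mult)
    then show ?case by (simp add: der_mult step1(2) assms)
  next
    case (step2 i)
    have "(mon (i - 1, 0) :: 'k laurent) = mon (i, 0) * Xinv" by (simp add: XY_mon mon_mult)
    then show ?case by (simp add: der_mult step2(2) Xi)
  qed
  have m2: "D (mon (0, j)) = 0" for j
  proof (induct j rule: int_induct[where k = 0])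
    case base then show ?case by (simp add: der_one mon_def flip: zero_prod_def)
  next
    case (step1 i)
    have "(mon (0, i + 1) :: 'k laurent) = mon (0, i) * Y" by (simp add: XY_mon mon_mult)
    then show ?case by (simp add: der_mult step1(2) assms)
  next
    case (step2 i)
    have "(mon (0, i - 1) :: 'k laurent) = mon (0, i) * Yinv" by (simp add: XY_mon mon_mult)
    then show ?case by (simp add: der_mult step2(2) Yi)
  qed
  have m: "D (mon a) = 0" for a
  proof -
    obtain i j where a: "a = (i, j)" by fastforce
    have "(mon a :: 'k laurent) = mon (i, 0) * mon (0, j)" by (simp add: a mon_mult)
    then show ?thesis using m1 m2 by (simp add: der_mult)
  qed
  show ?thesis
  proof (induct f rule: laurent_induct)
    case zero then show ?case by (simp add: der_zero)
  next
    case (add k c f) then show ?case by (simp add: der_add single_cst_mon der_cst_mult m)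
  qed
qed

end

lemma is_derivation_lin:
  "is_derivation (\<lambda>g. a * delta1 g + b * delta2 g)"
  unfolding is_derivation_def by (simp add: algebra_simps)

lemma is_derivation_diff:
  assumes "is_derivation D" "is_derivation E" shows "is_derivation (\<lambda>g. D g - E g)"
  unfolding is_derivation_def
  apply (intro conjI allI)
  apply (simp add: der_add[OF assms(1)] der_add[OF assms(2)])
  apply (simp add: der_cst_mult[OF assms(1)] der_cst_mult[OF assms(2)] right_diff_distrib)
  apply (simp add: der_mult[OF assms(1)] der_mult[OF assms(2)] algebra_simps)
  done

lemma delta_XY [simp]: "delta1 X = X" "delta2 X = 0" "delta1 Y = 0" "delta2 Y = Y"
  by (rule poly_mapping_eqI; simp add: XY_mon lookup_mon)+

lemma der_repr:
  assumes D: "is_derivation D"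
  shows "D g = (D X * Xinv) * delta1 g + (D Y * Yinv) * delta2 g"
proof -
  let ?E = "\<lambda>g. D g - ((D X * Xinv) * delta1 g + (D Y * Yinv) * delta2 g)"
  have E: "is_derivation ?E" by (rule is_derivation_diff[OF D is_derivation_lin])
  have "D X * Xinv * X = D X" "D Y * Yinv * Y = D Y"
    using X_Xinv by (metis mult.assoc mult.commute mult_1_right)+
  then have "?E X = 0" "?E Y = 0" by simp_all
  then have "?E g = 0" using der_XY_zero[OF E] by blast
  then show ?thesis by simp
qed

lemma theta_apply: "theta f g = delta2 f * delta1 g - delta1 f * delta2 g"
  by (simp add: theta_def)

lemma theta_der: "is_derivation (theta f)"
  unfolding is_derivation_def theta_def by (simp add: algebra_simps)

lemma theta_Div: "Div (theta f) = 0"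
proof -
  have "theta f X * Xinv = delta2 f" "theta f Y * Yinv = - delta1 f"
    by (simp_all add: theta_apply mult.assoc X_Xinv)
  then show ?thesis by (simp add: Div_def delta12)
qed

lemma VP_lie:
  assumes xi: "is_derivation xi" and dv: "Div xi = 0"
  shows "lie xi (theta f) = theta (xi f)"
proof
  fix g
  define a where "a = xi X * Xinv"
  define b where "b = xi Y * Yinv"
  have rep: "xi h = a * delta1 h + b * delta2 h" for h
    unfolding a_def b_def by (rule der_repr[OF xi])
  have "delta1 a + delta2 b = 0" using dv by (simp add: Div_def a_def b_def)
  then have hb: "delta2 b = - delta1 a" by (simp add: eq_neg_iff_add_eq_0 add.commute)
  show "lie xi (theta f) g = theta (xi f) g"
    unfolding lie_def theta_apply rep
    by (simp add: delta12 hb algebra_simps)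
qed



lemma der_sum: assumes "is_derivation D" shows "D (sum h S) = (\<Sum>i\<in>S. D (h i))"
  by (induct S rule: infinite_finite_induct) (simp_all add: der_zero[OF assms] der_add[OF assms])

lemma der_of_nat: assumes "is_derivation D" shows "D (of_nat n) = 0"
  by (induct n) (simp_all add: der_zero[OF assms] der_add[OF assms] der_one[OF assms])

lemma der_of_nat_mult: assumes "is_derivation D" shows "D (of_nat n * h) = of_nat n * D h"
  by (simp add: der_mult[OF assms] der_of_nat[OF assms])

lemma der_leibniz:
  assumes D: "is_derivation D"
  shows "(D ^^ n) (f * g) = (\<Sum>i\<le>n. of_nat (n choose i) * (D ^^ i) f * (D ^^ (n - i)) g)"
proof (induct n)
  case 0 then show ?case by simp
next
  case (Suc n)
  define F where "F i = (D ^^ i) f" for i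
  define G where "G i = (D ^^ i) g" for i
  have FS: "D (F i) = F (Suc i)" for i by (simp add: F_def)
  have GS: "D (G i) = G (Suc i)" for i by (simp add: G_def)
  have "(D ^^ Suc n) (f * g) = D (\<Sum>i\<le>n. of_nat (n choose i) * F i * G (n - i))"
    using Suc by (simp add: F_def G_def)
  also have "\<dots> = (\<Sum>i\<le>n. of_nat (n choose i) * (F i * G (Suc (n - i)) + G (n - i) * F (Suc i)))"
    by (simp add: der_sum[OF D] mult.assoc der_of_nat_mult[OF D] der_mult[OF D] der_of_nat[OF D] FS GS)
  also have "\<dots> = (\<Sum>i\<le>n. of_nat (n choose i) * F (Suc i) * G (n - i))
                   + (\<Sum>i\<le>n. of_nat (n choose i) * F i * G (Suc (n - i)))"
    by (simp only: sum.distrib[symmetric]) (rule sum.cong, simp, simp add: algebra_simps)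
  also have "(\<Sum>i\<le>n. of_nat (n choose i) * F i * G (Suc (n - i)))
      = (\<Sum>i\<le>Suc n. of_nat (n choose i) * F i * G (Suc n - i))"
    by (simp add: Suc_diff_le binomial_eq_0)
  also have "\<dots> = F 0 * G (Suc n) + (\<Sum>i\<le>n. of_nat (n choose Suc i) * F (Suc i) * G (n - i))"
    by (subst sum.atMost_Suc_shift) simp
  finally have 1: "(D ^^ Suc n) (f * g) = F 0 * G (Suc n) + (\<Sum>i\<le>n. of_nat (n choose i) * F (Suc i) * G (n - i))
      + (\<Sum>i\<le>n. of_nat (n choose Suc i) * F (Suc i) * G (n - i))" by (simp add: algebra_simps)
  have "(\<Sum>i\<le>Suc n. of_nat (Suc n choose i) * F i * G (Suc n - i))
     = F 0 * G (Suc n) + (\<Sum>i\<le>n. of_nat (Suc n choose Suc i) * F (Suc i) * G (n - i))"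
    by (subst sum.atMost_Suc_shift) simp
  also have "\<dots> = F 0 * G (Suc n) + ((\<Sum>i\<le>n. of_nat (n choose i) * F (Suc i) * G (n - i))
      + (\<Sum>i\<le>n. of_nat (n choose Suc i) * F (Suc i) * G (n - i)))"
    by (simp only: sum.distrib[symmetric] binomial_Suc_Suc of_nat_add distrib_right)
  also have "\<dots> = F 0 * G (Suc n) + (\<Sum>i\<le>n. of_nat (n choose i) * F (Suc i) * G (n - i))
      + (\<Sum>i\<le>n. of_nat (n choose Suc i) * F (Suc i) * G (n - i))"
    by (rule add.assoc[symmetric])
  finally show ?case using 1 by (simp add: F_def G_def)
qed

lemma funpow_zero_der: assumes "is_derivation D" shows "(D ^^ m) 0 = 0"
  by (induct m) (simp_all add: der_zero[OF assms])

lemma funpow_one_der: assumes "is_derivation D" shows "(D ^^ Suc m) 1 = 0"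
  by (induct m) (simp_all add: der_zero[OF assms] der_one[OF assms])

lemma last_nonzero:
  fixes D :: "'a::zero \<Rightarrow> 'a"
  assumes "(D ^^ s) u = 0" "u \<noteq> 0"
  shows "\<exists>p. (D ^^ p) u \<noteq> 0 \<and> (D ^^ Suc p) u = 0"
  using assms
proof (induct s)
  case 0 then show ?case by auto
next
  case (Suc s) then show ?case by (cases "(D ^^ s) u = 0") auto
qed

lemma lnd_unit:
  fixes D :: "'k::field_char_0 laurent \<Rightarrow> 'k laurent"
  assumes D: "is_derivation D" and L: "locally_nilpotent D" and uv: "u * v = 1"
  shows "D u = 0"
proof (rule ccontr)
  assume Du: "D u \<noteq> 0"
  have u0: "u \<noteq> 0" "v \<noteq> 0" using uv by auto
  obtain su sv where su: "(D ^^ su) u = 0" and sv: "(D ^^ sv) v = 0"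
    using L unfolding locally_nilpotent_def by blast
  obtain p where p: "(D ^^ p) u \<noteq> 0" "(D ^^ Suc p) u = 0"
    using last_nonzero[OF su u0(1)] by blast
  obtain q where q: "(D ^^ q) v \<noteq> 0" "(D ^^ Suc q) v = 0"
    using last_nonzero[OF sv u0(2)] by blast
  have hp: "(D ^^ k) u = 0" if "k > p" for k
  proof -
    have "k = (k - Suc p) + Suc p" using \<open>k > p\<close> by simp
    then obtain m where "k = m + Suc p" by blast
    then have "(D ^^ k) u = (D ^^ m) ((D ^^ Suc p) u)" by (simp only: funpow_add comp_apply)
    then show ?thesis using p(2) by (simp only: funpow_zero_der[OF D])
  qed
  have hq: "(D ^^ k) v = 0" if "k > q" for k
  proof -
    have "k = (k - Suc q) + Suc q" using \<open>k > q\<close> by simp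
    then obtain m where "k = m + Suc q" by blast
    then have "(D ^^ k) v = (D ^^ m) ((D ^^ Suc q) v)" by (simp only: funpow_add comp_apply)
    then show ?thesis using q(2) by (simp only: funpow_zero_der[OF D])
  qed
  have "p \<noteq> 0" using Du p(2) by (cases p) auto
  then have "(D ^^ (p + q)) (u * v) = 0" using uv funpow_one_der[OF D, of "p + q - 1"] by simp
  moreover have "(D ^^ (p + q)) (u * v) = of_nat ((p + q) choose p) * (D ^^ p) u * (D ^^ q) v"
  proof -
    have "(D ^^ (p + q)) (u * v) = (\<Sum>i\<le>p + q. of_nat ((p + q) choose i) * (D ^^ i) u * (D ^^ (p + q - i)) v)"
      by (rule der_leibniz[OF D])
    also have "\<dots> = of_nat ((p + q) choose p) * (D ^^ p) u * (D ^^ (p + q - p)) v"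
    proof -
      let ?h = "\<lambda>i. of_nat ((p + q) choose i) * (D ^^ i) u * (D ^^ (p + q - i)) v"
      have "(\<Sum>i\<le>p + q. ?h i) = ?h p + (\<Sum>i\<in>{..p + q} - {p}. ?h i)"
        by (rule sum.remove) auto
      also have "(\<Sum>i\<in>{..p + q} - {p}. ?h i) = 0"
      proof (rule sum.neutral, rule ballI)
        fix i assume "i \<in> {..p + q} - {p}"
        then show "?h i = 0" using hp hq by (cases "i > p") auto
      qed
      finally show ?thesis by simp
    qed
    finally show ?thesis by simp
  qed
  moreover have "(of_nat ((p + q) choose p) :: 'k laurent) \<noteq> 0" by simp
  ultimately show False using p(1) q(1) by simp
qed

lemma lnd_zero:
  fixes D :: "'k::field_char_0 laurent \<Rightarrow> 'k laurent"
  assumes D: "is_derivation D" and L: "locally_nilpotent D"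
  shows "D = zerovf"
proof
  fix f
  have "D X = 0" "D Y = 0" using lnd_unit[OF D L] X_Xinv by blast+
  then show "D f = zerovf f" using der_XY_zero[OF D] by (simp add: zerovf_def)
qed




lemma lookup_cst: "Poly_Mapping.lookup (cst c) k = (if k = 0 then c else 0)"
  by (simp add: cst_zero_key lookup_single when_def)

lemma lookup_one: "Poly_Mapping.lookup (1::'k::comm_ring_1 laurent) k = (if k = 0 then 1 else 0)"
  using lookup_cst[of 1 k] by (simp add: cst_one)

lemma theta_add: "theta (f + g) = (\<lambda>h. theta f h + theta g h)"
  by (rule ext) (simp add: theta_apply algebra_simps)
lemma theta_diff: "theta (f - g) = (\<lambda>h. theta f h - theta g h)"
  by (rule ext) (simp add: theta_apply algebra_simps)
lemma theta_cst_mult: "theta (cst c * f) = (\<lambda>h. cst c * theta f h)"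
  by (rule ext) (simp add: theta_apply algebra_simps)
lemma theta_zero: "theta 0 = zerovf"
  by (rule ext) (simp add: theta_apply zerovf_def)
lemma theta_cst: "theta (cst c) = zerovf"
  by (rule ext) (simp add: theta_apply zerovf_def)

lemma Ham_iff: "xi \<in> Ham \<longleftrightarrow> (\<exists>f. xi = theta f)"
  by (auto simp: Ham_def)

lemma VP_iff: "xi \<in> VP \<longleftrightarrow> is_derivation xi \<and> Div xi = 0"
  by (simp add: VP_def Vec_def)

lemma theta_VP: "theta f \<in> VP"
  by (simp add: VP_iff theta_der theta_Div)

lemma Ham_VP: "Ham \<subseteq> VP"
  using theta_VP by (auto simp: Ham_def)

lemma lie_theta: "lie (theta f) (theta g) = theta (theta f g)"
  by (rule VP_lie[OF theta_der theta_Div])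

lemma vsubspace_Ham: "vsubspace (Ham :: ('k::comm_ring_1 laurent \<Rightarrow> 'k laurent) set)"
  unfolding vsubspace_def
proof (intro conjI ballI allI)
  show "zerovf \<in> (Ham :: ('k laurent \<Rightarrow> 'k laurent) set)" unfolding Ham_iff theta_zero[symmetric] by blast
  fix a b :: "'k laurent \<Rightarrow> 'k laurent" and c :: 'k
  assume "a \<in> Ham" "b \<in> Ham"
  then obtain f g where fg: "a = theta f" "b = theta g" by (auto simp: Ham_iff)
  show "(\<lambda>h. a h + b h) \<in> Ham" unfolding Ham_iff fg theta_add[symmetric] by blast
  show "(\<lambda>h. cst c * a h) \<in> Ham" unfolding Ham_iff fg theta_cst_mult[symmetric] by blast
qed

lemma lie_subalgebra_Ham: "lie_subalgebra (Ham :: ('k::comm_ring_1 laurent \<Rightarrow> 'k laurent) set)"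
  unfolding lie_subalgebra_def
proof (intro conjI ballI)
  show "vsubspace Ham" by (rule vsubspace_Ham)
  fix a b :: "'k laurent \<Rightarrow> 'k laurent" assume "a \<in> Ham" "b \<in> Ham"
  then obtain f g where "a = theta f" "b = theta g" by (auto simp: Ham_iff)
  then show "lie a b \<in> Ham" by (simp add: lie_theta Ham_iff) blast
qed

lemma lie_ideal_Ham_VP: "lie_ideal (Ham :: ('k::comm_ring_1 laurent \<Rightarrow> 'k laurent) set) VP"
  unfolding lie_ideal_def
proof (intro conjI ballI)
  show "Ham \<subseteq> VP" "vsubspace Ham" by (rule Ham_VP, rule vsubspace_Ham)
  fix a b :: "'k laurent \<Rightarrow> 'k laurent" assume "a \<in> VP" "b \<in> Ham"
  then obtain g where "b = theta g" "is_derivation a" "Div a = 0" by (auto simp: Ham_iff VP_iff)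
  then show "lie a b \<in> Ham" by (simp add: VP_lie Ham_iff) blast
qed

lemma lie_generated_zero:
  assumes "S \<subseteq> {zerovf}"
  shows "lie_generated S = {zerovf}"
proof -
  have sub: "lie_subalgebra {zerovf}"
    by (simp add: lie_subalgebra_def vsubspace_def lie_def zerovf_def)
  have "lie_generated S \<subseteq> {zerovf}"
    unfolding lie_generated_def using sub assms by blast
  moreover have "zerovf \<in> lie_generated S"
    unfolding lie_generated_def lie_subalgebra_def vsubspace_def by blast
  ultimately show ?thesis by blast
qed

lemma part1a: "lie_generated {D \<in> (Vec :: ('k::field_char_0 laurent \<Rightarrow> 'k laurent) set). locally_nilpotent D} = {zerovf}"
proof (rule lie_generated_zero, rule subsetI)
  fix D :: "'k laurent \<Rightarrow> 'k laurent"
  assume "D \<in> {D \<in> Vec. locally_nilpotent D}"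
  then have "is_derivation D" "locally_nilpotent D" by (auto simp: Vec_def)
  then show "D \<in> {zerovf}" using lnd_zero by blast
qed
lemma part1b: "lie_generated {D \<in> (Ham :: ('k::field_char_0 laurent \<Rightarrow> 'k laurent) set). locally_nilpotent D} = {zerovf}"
proof (rule lie_generated_zero, rule subsetI)
  fix D :: "'k laurent \<Rightarrow> 'k laurent"
  assume "D \<in> {D \<in> Ham. locally_nilpotent D}"
  then have "is_derivation D" "locally_nilpotent D" using theta_der by (auto simp: Ham_iff)
  then show "D \<in> {zerovf}" using lnd_zero by blast
qed

lemma Xinv_X: "Xinv * X = 1" by (simp add: X_Xinv mult.commute)
lemma Yinv_Y: "Yinv * Y = 1" by (simp add: X_Xinv mult.commute)

lemma cst_delta_theta:
  assumes "(\<lambda>g. cst c0 * delta1 g + cst c1 * delta2 g) = theta f"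
  shows "c0 = 0 \<and> c1 = 0"
proof -
  have "cst c0 * X = delta2 f * X" using fun_cong[OF assms, of X] by (simp add: theta_apply)
  then have "cst c0 * X * Xinv = delta2 f * X * Xinv" by simp
  then have 1: "cst c0 = delta2 f" by (simp add: mult.assoc X_Xinv)
  have "cst c1 * Y = - delta1 f * Y" using fun_cong[OF assms, of Y] by (simp add: theta_apply)
  then have "cst c1 * Y * Yinv = - delta1 f * Y * Yinv" by simp
  then have 2: "cst c1 = - delta1 f" by (simp add: mult.assoc X_Xinv)
  have "c0 = 0" using arg_cong[OF 1, of "\<lambda>p. Poly_Mapping.lookup p 0"] by (simp add: lookup_cst zero_prod_def)
  moreover have "c1 = 0" using arg_cong[OF 2, of "\<lambda>p. Poly_Mapping.lookup p 0"] by (simp add: lookup_cst zero_prod_def)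
  ultimately show ?thesis ..
qed

lemma delta1_VP: "delta1 \<in> VP"
proof -
  have "is_derivation delta1" by (simp add: is_derivation_def)
  moreover have "Div delta1 = 0" by (simp add: Div_def X_Xinv)
  ultimately show ?thesis by (simp add: VP_iff)
qed

lemma delta2_VP: "delta2 \<in> VP"
proof -
  have "is_derivation delta2" by (simp add: is_derivation_def)
  moreover have "Div delta2 = 0" by (simp add: Div_def X_Xinv)
  ultimately show ?thesis by (simp add: VP_iff)
qed

lemma Ham_ne_VP: "(Ham :: ('k::comm_ring_1 laurent \<Rightarrow> 'k laurent) set) \<noteq> VP"
proof
  assume "(Ham :: ('k laurent \<Rightarrow> 'k laurent) set) = VP"
  moreover have "delta1 \<in> (VP :: ('k laurent \<Rightarrow> 'k laurent) set)" by (rule delta1_VP)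
  ultimately have "delta1 \<in> (Ham :: ('k laurent \<Rightarrow> 'k laurent) set)" by simp
  then obtain f :: "'k laurent" where f: "delta1 = theta f" by (auto simp: Ham_iff)
  have "(\<lambda>g. cst 1 * delta1 g + cst 0 * delta2 g) = theta f"
    using f by (simp add: cst_one cst_zero_key)
  then show False using cst_delta_theta[of 1 0 f] by simp
qed



lemma lookup_wt:
  fixes w :: "int \<times> int \<Rightarrow> 'k::comm_ring_1" and p :: "'k laurent"
  shows "Poly_Mapping.lookup (Poly_Mapping.mapp (\<lambda>k c. w k * c) p) k = w k * Poly_Mapping.lookup p k"
  by (simp add: lookup_mapp when_def in_keys_iff)

lemma lookup_diff_cst: "Poly_Mapping.lookup (a - cst c) k = Poly_Mapping.lookup a k - (if k = 0 then c else 0)"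
  by (simp add: lookup_minus lookup_cst)

lemma VP_decomp:
  fixes xi :: "'k::field_char_0 laurent \<Rightarrow> 'k laurent"
  assumes "xi \<in> VP"
  shows "\<exists>f. \<forall>g. xi g = cst (Poly_Mapping.lookup (xi X * Xinv) 0) * delta1 g
      + cst (Poly_Mapping.lookup (xi Y * Yinv) 0) * delta2 g + theta f g"
proof -
  have D: "is_derivation xi" and dv: "Div xi = 0" using assms by (auto simp: VP_iff)
  define a where "a = xi X * Xinv"
  define b where "b = xi Y * Yinv"
  define c0 where "c0 = Poly_Mapping.lookup a 0"
  define c1 where "c1 = Poly_Mapping.lookup b 0"
  define a' where "a' = a - cst c0"
  define b' where "b' = b - cst c1"
  have div: "delta1 a + delta2 b = 0" using dv by (simp add: Div_def a_def b_def)
  have eq: "of_int i * Poly_Mapping.lookup a' (i, j) + of_int j * Poly_Mapping.lookup b' (i, j) = 0" for i j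
  proof -
    have "Poly_Mapping.lookup (delta1 a + delta2 b) (i, j) = 0" using div by simp
    then show ?thesis by (auto simp: a'_def b'_def lookup_diff_cst lookup_add zero_prod_def)
  qed
  have z: "Poly_Mapping.lookup a' (0, 0) = 0" "Poly_Mapping.lookup b' (0, 0) = 0"
    by (simp_all add: a'_def b'_def lookup_diff_cst c0_def c1_def zero_prod_def)
  define w1 :: "int \<times> int \<Rightarrow> 'k" where "w1 k = (if snd k \<noteq> 0 then 1 / of_int (snd k) else 0)" for k
  define w2 :: "int \<times> int \<Rightarrow> 'k" where "w2 k = (if snd k = 0 \<and> fst k \<noteq> 0 then - 1 / of_int (fst k) else 0)" for k
  define f where "f = Poly_Mapping.mapp (\<lambda>k c. w1 k * c) a' + Poly_Mapping.mapp (\<lambda>k c. w2 k * c) b'"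
  have lf: "Poly_Mapping.lookup f k = w1 k * Poly_Mapping.lookup a' k + w2 k * Poly_Mapping.lookup b' k" for k
    by (simp add: f_def lookup_add lookup_wt)
  have f2: "delta2 f = a'"
  proof (rule poly_mapping_eqI)
    fix k :: "int \<times> int"
    obtain i j where k: "k = (i, j)" by fastforce
    show "Poly_Mapping.lookup (delta2 f) k = Poly_Mapping.lookup a' k"
    proof (cases "j = 0")
      case True
      have "Poly_Mapping.lookup a' (i, j) = 0"
      proof (cases "i = 0")
        case True then show ?thesis using z \<open>j = 0\<close> by simp
      next
        case False then show ?thesis using eq[of i j] \<open>j = 0\<close> by simp
      qed
      then show ?thesis using True by (simp add: k)
    next
      case False then show ?thesis by (simp add: k lf w1_def w2_def)
    qed
  qed
  have f1: "delta1 f = - b'"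
  proof (rule poly_mapping_eqI)
    fix k :: "int \<times> int"
    obtain i j where k: "k = (i, j)" by fastforce
    show "Poly_Mapping.lookup (delta1 f) k = Poly_Mapping.lookup (- b') k"
    proof (cases "j = 0")
      case True
      show ?thesis
      proof (cases "i = 0")
        case True then show ?thesis using z \<open>j = 0\<close> by (simp add: k lf)
      next
        case False then show ?thesis using \<open>j = 0\<close> by (simp add: k lf w1_def w2_def)
      qed
    next
      case False
      have "of_int i * Poly_Mapping.lookup a' (i, j) = - (of_int j * Poly_Mapping.lookup b' (i, j))"
        using eq[of i j] by (simp add: eq_neg_iff_add_eq_0)
      then show ?thesis using False by (simp add: k lf w1_def w2_def field_simps)
    qed
  qed
  have "xi g = cst c0 * delta1 g + cst c1 * delta2 g + theta f g" for g
  proof -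
    have "xi g = a * delta1 g + b * delta2 g" unfolding a_def b_def by (rule der_repr[OF D])
    moreover have "a = a' + cst c0" "b = b' + cst c1" by (simp_all add: a'_def b'_def)
    ultimately show ?thesis by (simp add: theta_apply f1 f2 algebra_simps)
  qed
  then show ?thesis unfolding c0_def c1_def a_def b_def by blast
qed

lemma codim: "codim_in (Ham :: ('k::field_char_0 laurent \<Rightarrow> 'k laurent) set) VP 2"
  unfolding codim_in_def
proof (intro exI conjI allI impI ballI)
  let ?v = "\<lambda>i::nat. if i = 0 then delta1 else (delta2 :: 'k laurent \<Rightarrow> 'k laurent)"
  show "?v i \<in> VP" if "i < 2" for i by (simp add: delta1_VP delta2_VP)
  fix xi :: "'k laurent \<Rightarrow> 'k laurent" assume xi: "xi \<in> VP"
  have sum2: "(\<Sum>i<2. cst (c i) * ?v i g) = cst (c 0) * delta1 g + cst (c 1) * delta2 g" for c :: "nat \<Rightarrow> 'k" and g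
    by (simp add: numeral_2_eq_2)
  define c0 where "c0 = Poly_Mapping.lookup (xi X * Xinv) 0"
  define c1 where "c1 = Poly_Mapping.lookup (xi Y * Yinv) 0"
  obtain f where f: "\<And>g. xi g = cst c0 * delta1 g + cst c1 * delta2 g + theta f g"
    using VP_decomp[OF xi] unfolding c0_def c1_def by blast
  let ?c = "\<lambda>i::nat. if i = 0 then c0 else if i = 1 then c1 else 0"
  show "\<exists>!c. (\<forall>i\<ge>2. c i = 0) \<and> (\<lambda>g. xi g - (\<Sum>i<2. cst (c i) * ?v i g)) \<in> Ham"
  proof (rule ex1I[of _ ?c])
    show "(\<forall>i\<ge>2. ?c i = 0) \<and> (\<lambda>g. xi g - (\<Sum>i<2. cst (?c i) * ?v i g)) \<in> Ham"
    proof
      show "\<forall>i\<ge>2. ?c i = 0" by simp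
      have "(\<lambda>g. xi g - (cst c0 * delta1 g + cst c1 * delta2 g)) = theta f"
        by (rule ext) (simp add: f)
      then show "(\<lambda>g. xi g - (\<Sum>i<2. cst (?c i) * ?v i g)) \<in> Ham"
        unfolding sum2 Ham_iff by auto
    qed
  next
    fix c assume c: "(\<forall>i\<ge>2. c i = 0) \<and> (\<lambda>g. xi g - (\<Sum>i<2. cst (c i) * ?v i g)) \<in> Ham"
    then obtain h where h: "(\<lambda>g. xi g - (cst (c 0) * delta1 g + cst (c 1) * delta2 g)) = theta h"
      unfolding sum2 Ham_iff by blast
    have "(\<lambda>g. cst (?c 0 - c 0) * delta1 g + cst (?c 1 - c 1) * delta2 g) = theta (h - f)"
    proof
      fix g
      have "theta h g = xi g - (cst (c 0) * delta1 g + cst (c 1) * delta2 g)" using fun_cong[OF h, of g] by simp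
      then show "cst (?c 0 - c 0) * delta1 g + cst (?c 1 - c 1) * delta2 g = theta (h - f) g"
      proof -
        have "theta (h - f) g = theta h g - theta f g" by (simp add: theta_diff)
        also have "\<dots> = cst c0 * delta1 g + cst c1 * delta2 g - (cst (c 0) * delta1 g + cst (c 1) * delta2 g)"
          using \<open>theta h g = _\<close> f[of g] by simp
        also have "\<dots> = cst (c0 - c 0) * delta1 g + cst (c1 - c 1) * delta2 g"
          by (simp add: cst_zero_key single_diff algebra_simps)
        finally show ?thesis by simp
      qed
    qed
    from cst_delta_theta[OF this] have e: "?c 0 = c 0" "?c 1 = c 1" by auto
    show "c = ?c"
      proof
        fix i show "c i = ?c i"
          using e c by (cases "i = 0"; cases "i = 1") auto
      qed
  qed
qed



lemma theta_normalize: "theta f = theta (f - cst (Poly_Mapping.lookup f 0))"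
  by (simp add: theta_diff theta_cst zerovf_def)

lemma lookup_Div0: "Poly_Mapping.lookup (Div xi) 0 = 0"
  by (simp add: Div_def lookup_add zero_prod_def del: delta1_mult delta2_mult)

lemma Div_surj:
  fixes h :: "'k::field_char_0 laurent"
  assumes h0: "Poly_Mapping.lookup h 0 = 0"
  shows "\<exists>xi\<in>Vec. Div xi = h"
proof -
  define wL :: "int \<times> int \<Rightarrow> 'k" where "wL k = 1 / of_int (fst k ^ 2 + snd k ^ 2)" for k
  define P where "P = Poly_Mapping.mapp (\<lambda>k c. wL k * c) h"
  define xi where "xi = (\<lambda>g. delta1 P * delta1 g + delta2 P * delta2 g)"
  have lP: "Poly_Mapping.lookup P k = wL k * Poly_Mapping.lookup h k" for k
    unfolding P_def by (rule lookup_wt)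
  have "xi \<in> Vec" unfolding xi_def Vec_def by (simp add: is_derivation_lin)
  moreover have "Div xi = h"
  proof -
    have "Div xi = delta1 (delta1 P) + delta2 (delta2 P)"
    proof -
      have "xi X * Xinv = delta1 P" "xi Y * Yinv = delta2 P"
        by (simp_all add: xi_def mult.assoc X_Xinv)
      then show ?thesis unfolding Div_def by simp
    qed
    also have "\<dots> = h"
    proof (rule poly_mapping_eqI)
      fix k :: "int \<times> int"
      obtain i j where k: "k = (i, j)" by fastforce
      show "Poly_Mapping.lookup (delta1 (delta1 P) + delta2 (delta2 P)) k = Poly_Mapping.lookup h k"
      proof (cases "k = 0")
        case True then show ?thesis using h0 by (simp add: lookup_add lP zero_prod_def)
      next
        case False
        then have "i ^ 2 + j ^ 2 \<noteq> 0" using k by (simp add: zero_prod_def)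
        then have ne: "(of_int (i ^ 2 + j ^ 2) :: 'k) \<noteq> 0" by (simp only: of_int_eq_0_iff) simp
        have "Poly_Mapping.lookup (delta1 (delta1 P) + delta2 (delta2 P)) k
              = of_int (i ^ 2 + j ^ 2) * Poly_Mapping.lookup P k"
          by (simp add: lookup_add k power2_eq_square algebra_simps)
        also have "\<dots> = of_int (i ^ 2 + j ^ 2) * (1 / of_int (i ^ 2 + j ^ 2)) * Poly_Mapping.lookup h k"
          by (simp only: lP wL_def k fst_conv snd_conv mult.assoc)
        also have "\<dots> = Poly_Mapping.lookup h k" using ne by simp
        finally show ?thesis .
      qed
    qed
    finally show ?thesis .
  qed
  ultimately show ?thesis by blast
qed

lemma Eom_Ham: "(Eom :: ('k::field_char_0 laurent \<Rightarrow> 'k laurent) set) = Ham"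
proof
  show "(Eom :: ('k laurent \<Rightarrow> 'k laurent) set) \<subseteq> Ham" unfolding Eom_def Ham_def by (rule image_mono) simp
  show "(Ham :: ('k laurent \<Rightarrow> 'k laurent) set) \<subseteq> Eom"
  proof
    fix a :: "'k laurent \<Rightarrow> 'k laurent" assume "a \<in> Ham"
    then obtain f where f: "a = theta f" by (auto simp: Ham_iff)
    have "Poly_Mapping.lookup (f - cst (Poly_Mapping.lookup f 0)) 0 = 0"
      by (simp add: lookup_diff_cst)
    then obtain xi where "xi \<in> Vec" "Div xi = f - cst (Poly_Mapping.lookup f 0)"
      using Div_surj by blast
    then have "f - cst (Poly_Mapping.lookup f 0) \<in> Div ` Vec" by (metis image_eqI)
    then have "theta (f - cst (Poly_Mapping.lookup f 0)) \<in> Eom" unfolding Eom_def by (rule imageI)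
    then show "a \<in> Eom" using f theta_normalize[of f] by simp
  qed
qed



lemma one_bracket:
  fixes f :: "'k::field_char_0 laurent"
  shows "\<exists>u w. theta f = lie (theta u) (theta w)"
proof -
  define h where "h = f - cst (Poly_Mapping.lookup f 0)"
  have h0: "Poly_Mapping.lookup h 0 = 0" by (simp add: h_def lookup_diff_cst)
  define N :: int where "N = 1 + (\<Sum>k\<in>Poly_Mapping.keys h. \<bar>snd k\<bar>)"
  have bound: "\<bar>snd k\<bar> < N" if "k \<in> Poly_Mapping.keys h" for k
  proof -
    have "\<bar>snd k\<bar> \<le> (\<Sum>k\<in>Poly_Mapping.keys h. \<bar>snd k\<bar>)"
      by (rule member_le_sum) (use that in auto)
    then show ?thesis by (simp add: N_def)
  qed
  have Npos: "N > 0" unfolding N_def by (smt (verit) sum_nonneg abs_ge_zero)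
  define a :: "int \<times> int" where "a = (1, N)"
  define wN :: "int \<times> int \<Rightarrow> 'k" where "wN k = 1 / of_int (N * fst k - snd k)" for k
  define q where "q = Poly_Mapping.mapp (\<lambda>k c. wN k * c) h"
  have lq: "Poly_Mapping.lookup q k = wN k * Poly_Mapping.lookup h k" for k
    unfolding q_def by (rule lookup_wt)
  define w :: "'k laurent" where "w = mon (- a) * q"
  have th: "theta (mon a) w = cst (of_int N) * (mon a * delta1 w) - mon a * delta2 w"
    by (simp add: theta_apply delta1_mon delta2_mon cst_one a_def mult.assoc)
  have key: "theta (mon a) w = h"
  proof (rule poly_mapping_eqI)
    fix k :: "int \<times> int"
    obtain i j where k: "k = (i, j)" by fastforce
    have "Poly_Mapping.lookup (theta (mon a) w) k
        = of_int N * (of_int (i - 1) * Poly_Mapping.lookup q k) - of_int (j - N) * Poly_Mapping.lookup q k"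
      unfolding th by (simp add: lookup_minus w_def k a_def del: delta1_mult delta2_mult)
    also have "\<dots> = of_int (N * i - j) * Poly_Mapping.lookup q k"
      by (simp add: algebra_simps)
    also have "\<dots> = Poly_Mapping.lookup h k"
    proof (cases "Poly_Mapping.lookup h k = 0")
      case True then show ?thesis by (simp add: lq)
    next
      case False
      then have kk: "k \<in> Poly_Mapping.keys h" by (simp add: in_keys_iff)
      have "N * i - j \<noteq> 0"
      proof
        assume e: "N * i - j = 0"
        show False
        proof (cases "i = 0")
          case True
          then have "k = 0" using e k by (simp add: zero_prod_def)
          then show False using False h0 by simp
        next
          case False
          have "N * 1 \<le> N * \<bar>i\<bar>" using False Npos by (intro mult_left_mono) auto
          moreover have "j = N * i" using e by simp
          then have "\<bar>j\<bar> = N * \<bar>i\<bar>" using Npos by (simp add: abs_mult)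
          ultimately show False using bound[OF kk] k by simp
        qed
      qed
      then have "(of_int (N * i - j) :: 'k) \<noteq> 0" by (simp only: of_int_eq_0_iff) simp
      then show ?thesis by (simp add: lq wN_def k)
    qed
    finally show "Poly_Mapping.lookup (theta (mon a) w) k = Poly_Mapping.lookup h k" .
  qed
  have "lie (theta (mon a)) (theta w) = theta f"
    unfolding lie_theta key h_def by (rule theta_normalize[symmetric])
  then show ?thesis by metis
qed



lemma lie_in_Ham: "a \<in> Ham \<Longrightarrow> b \<in> Ham \<Longrightarrow> lie a b \<in> Ham"
  using lie_subalgebra_Ham unfolding lie_subalgebra_def by blast

lemma bracket_span_Ham: "bracket_span Ham Ham = (Ham :: ('k::field_char_0 laurent \<Rightarrow> 'k laurent) set)"
proof
  show "bracket_span Ham Ham \<subseteq> (Ham :: ('k laurent \<Rightarrow> 'k laurent) set)"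
    unfolding bracket_span_def
    by (rule Inter_lower) (use vsubspace_Ham lie_in_Ham in blast)
  show "(Ham :: ('k laurent \<Rightarrow> 'k laurent) set) \<subseteq> bracket_span Ham Ham"
  proof
    fix x :: "'k laurent \<Rightarrow> 'k laurent" assume "x \<in> Ham"
    then obtain f where f: "x = theta f" by (auto simp: Ham_iff)
    obtain u w where "theta f = lie (theta u) (theta w)" using one_bracket by blast
    then have "x \<in> {lie a b |a b. a \<in> Ham \<and> b \<in> Ham}" using f by (auto simp: Ham_iff)
    then show "x \<in> bracket_span Ham Ham" unfolding bracket_span_def by blast
  qed
qed

lemma nbrackets_le1:
  fixes x :: "'k::field_char_0 laurent \<Rightarrow> 'k laurent"
  assumes "x \<in> Ham"
  shows "nbrackets Ham x \<le> 1"
proof -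
  obtain f where f: "x = theta f" using assms by (auto simp: Ham_iff)
  obtain u w where uw: "theta f = lie (theta u) (theta w)" using one_bracket by blast
  have "\<exists>uu vv :: nat \<Rightarrow> ('k laurent \<Rightarrow> 'k laurent). (\<forall>i<1. uu i \<in> Ham \<and> vv i \<in> Ham) \<and>
      x = (\<lambda>g. \<Sum>i<1. lie (uu i) (vv i) g)"
    by (rule exI[of _ "\<lambda>_. theta u"], rule exI[of _ "\<lambda>_. theta w"]) (auto simp: Ham_iff f uw)
  then show ?thesis unfolding nbrackets_def by (rule Least_le)
qed

lemma theta_X_nonzero: "theta X \<noteq> (zerovf :: 'k::field_char_0 laurent \<Rightarrow> 'k laurent)"
proof
  assume "theta X = (zerovf :: 'k laurent \<Rightarrow> 'k laurent)"
  then have "theta X Y = (0 :: 'k laurent)" by (simp add: zerovf_def)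
  then have "(X * Y :: 'k laurent) = 0" by (simp add: theta_apply del: mult_eq_0_iff)
  moreover have "Poly_Mapping.lookup (X * Y :: 'k laurent) (1, 1) = 1"
    by (simp add: XY_mon mon_mult lookup_mon)
  ultimately show False by (metis lookup_zero zero_neq_one)
qed

lemma nbrackets_X: "nbrackets Ham (theta X :: 'k::field_char_0 laurent \<Rightarrow> 'k laurent) = 1"
proof -
  have le: "nbrackets Ham (theta X :: 'k laurent \<Rightarrow> 'k laurent) \<le> 1"
    by (rule nbrackets_le1) (auto simp: Ham_iff)
  have "nbrackets Ham (theta X :: 'k laurent \<Rightarrow> 'k laurent) \<noteq> 0"
  proof
    assume 0: "nbrackets Ham (theta X :: 'k laurent \<Rightarrow> 'k laurent) = 0"
    obtain u w where uw: "theta (X :: 'k laurent) = lie (theta u) (theta w)" using one_bracket by blast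
    have ex: "\<exists>n. \<exists>uu vv :: nat \<Rightarrow> ('k laurent \<Rightarrow> 'k laurent). (\<forall>i<n. uu i \<in> Ham \<and> vv i \<in> Ham) \<and>
      theta X = (\<lambda>g. \<Sum>i<n. lie (uu i) (vv i) g)"
      by (rule exI[of _ 1], rule exI[of _ "\<lambda>_. theta u"], rule exI[of _ "\<lambda>_. theta w"]) (auto simp: Ham_iff uw)
    have "\<exists>uu vv :: nat \<Rightarrow> ('k laurent \<Rightarrow> 'k laurent). (\<forall>i<nbrackets Ham (theta (X :: 'k laurent)). uu i \<in> Ham \<and> vv i \<in> Ham) \<and>
      theta X = (\<lambda>g. \<Sum>i<nbrackets Ham (theta (X :: 'k laurent)). lie (uu i) (vv i) g)"
      unfolding nbrackets_def by (rule LeastI_ex[OF ex])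
    then have "theta X = (zerovf :: 'k laurent \<Rightarrow> 'k laurent)" unfolding 0 by (simp add: zerovf_def)
    then show False using theta_X_nonzero by blast
  qed
  then show ?thesis using le by simp
qed

lemma width: "bracket_width (Ham :: ('k::field_char_0 laurent \<Rightarrow> 'k laurent) set) = 1"
proof -
  have "bracket_width (Ham :: ('k laurent \<Rightarrow> 'k laurent) set) = (SUP a \<in> (Ham :: ('k laurent \<Rightarrow> 'k laurent) set). enat (nbrackets Ham a))"
    by (simp add: bracket_width_def bracket_span_Ham)
  also have "\<dots> = 1"
  proof (rule antisym)
    show "(SUP a \<in> (Ham :: ('k laurent \<Rightarrow> 'k laurent) set). enat (nbrackets Ham a)) \<le> 1"
    proof (rule SUP_least)
      fix a :: "'k laurent \<Rightarrow> 'k laurent" assume "a \<in> Ham"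
      then have "nbrackets Ham a \<le> 1" by (rule nbrackets_le1)
      then show "enat (nbrackets Ham a) \<le> 1" by (simp add: one_enat_def)
    qed
    have "theta X \<in> (Ham :: ('k laurent \<Rightarrow> 'k laurent) set)" by (auto simp: Ham_iff)
    then have "enat (nbrackets Ham (theta X :: 'k laurent \<Rightarrow> 'k laurent)) \<le> (SUP a \<in> (Ham :: ('k laurent \<Rightarrow> 'k laurent) set). enat (nbrackets Ham a))"
      by (rule SUP_upper)
    then show "1 \<le> (SUP a \<in> (Ham :: ('k laurent \<Rightarrow> 'k laurent) set). enat (nbrackets Ham a))"
      by (simp add: nbrackets_X one_enat_def)
  qed
  finally show ?thesis .
qed



lemma polyN:
  fixes \<alpha> \<beta> \<gamma> n :: int
  assumes nz: "\<alpha> \<noteq> 0 \<or> \<beta> \<noteq> 0" and n: "n > \<bar>\<beta>\<bar> + \<bar>\<gamma>\<bar>"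
  shows "\<alpha> * n^2 + \<beta> * n + \<gamma> \<noteq> 0"
proof (cases "\<alpha> = 0")
  case True
  then have b: "\<bar>\<beta>\<bar> \<ge> 1" using nz by simp
  have "\<bar>\<beta> * n\<bar> = \<bar>\<beta>\<bar> * n" using n by (simp add: abs_mult)
  also have "\<dots> \<ge> 1 * n" using b n by (intro mult_right_mono) auto
  finally have "\<bar>\<beta> * n\<bar> > \<bar>\<gamma>\<bar>" using n by simp
  then show ?thesis using True by auto
next
  case False
  then have a: "\<bar>\<alpha>\<bar> \<ge> 1" by simp
  have n0: "n \<ge> 0" using n by simp
  have "\<bar>\<alpha> * n^2\<bar> = \<bar>\<alpha>\<bar> * n^2" by (simp add: abs_mult)
  also have "\<dots> \<ge> 1 * n^2" using a by (intro mult_right_mono) auto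
  finally have 1: "\<bar>\<alpha> * n^2\<bar> \<ge> n^2" by simp
  have 2: "\<bar>\<beta> * n\<bar> = \<bar>\<beta>\<bar> * n" using n0 by (simp add: abs_mult)
  have "n * (n - \<bar>\<beta>\<bar>) \<ge> n * 1" using n n0 by (intro mult_left_mono) auto
  then have 3: "n^2 - \<bar>\<beta>\<bar> * n \<ge> n" by (simp add: power2_eq_square algebra_simps)
  have "\<bar>\<alpha> * n^2 + \<beta> * n\<bar> \<ge> \<bar>\<alpha> * n^2\<bar> - \<bar>\<beta> * n\<bar>" by arith
  then have "\<bar>\<alpha> * n^2 + \<beta> * n\<bar> > \<bar>\<gamma>\<bar>" using 1 2 3 n by linarith
  then show ?thesis by auto
qed


lemma cst_mult_cst: "cst x * cst y = (cst (x * y) :: 'k::comm_ring_1 laurent)"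
  by (simp add: cst_zero_key mult_single)

lemma lookup_theta_mon:
  "Poly_Mapping.lookup (theta (mon a) q) k = of_int (pb a (k - a)) * Poly_Mapping.lookup (q :: 'k::comm_ring_1 laurent) (k - a)"
proof -
  have th: "theta (mon a) q = cst (of_int (snd a)) * (mon a * delta1 q) - cst (of_int (fst a)) * (mon a * delta2 q)"
    by (simp add: theta_apply delta1_mon delta2_mon mult.assoc)
  show ?thesis unfolding th
    by (simp only: lookup_minus lookup_cst_mult lookup_mon_mult lookup_delta1 lookup_delta2) (simp add: pb_def algebra_simps)
qed

lemma theta_mon_mon: "theta (mon a) (mon b) = cst (of_int (pb a b)) * (mon (a + b) :: 'k::comm_ring_1 laurent)"
proof (rule poly_mapping_eqI)
  fix k
  show "Poly_Mapping.lookup (theta (mon a) (mon b)) k = Poly_Mapping.lookup (cst (of_int (pb a b)) * (mon (a + b) :: 'k laurent)) k"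
    by (cases "k = a + b") (auto simp: lookup_theta_mon lookup_mon lookup_cst algebra_simps)
qed

lemma pb_self: "pb x x = 0" by (simp add: pb_def)
lemma pb_diff_left: "pb (s - t) t = pb s t" by (simp add: pb_def algebra_simps)
lemma pb_neg: "pb (- d) (k + d) = - pb d k" by (simp add: pb_def algebra_simps)

lemma sq_ne: "t \<noteq> (0 :: int \<times> int) \<Longrightarrow> fst t * fst t + snd t * snd t \<noteq> 0"
  by (cases t) (simp add: zero_prod_def)

lemma dot_ne:
  fixes s t :: "int \<times> int"
  assumes "s \<noteq> 0" "t \<noteq> 0" "pb s t = 0"
  shows "fst s * fst t + snd s * snd t \<noteq> 0"
proof
  assume d: "fst s * fst t + snd s * snd t = 0"
  have e: "snd s * fst t - fst s * snd t = 0" using assms(3) by (simp add: pb_def)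
  have "(fst t * fst t + snd t * snd t) * fst s = fst t * (fst s * fst t + snd s * snd t) - snd t * (snd s * fst t - fst s * snd t)"
    by (simp add: algebra_simps)
  then have 1: "(fst t * fst t + snd t * snd t) * fst s = 0" using d e by simp
  have "(fst t * fst t + snd t * snd t) * snd s = snd t * (fst s * fst t + snd s * snd t) + fst t * (snd s * fst t - fst s * snd t)"
    by (simp add: algebra_simps)
  then have 2: "(fst t * fst t + snd t * snd t) * snd s = 0" using d e by simp
  have ne: "fst t * fst t + snd t * snd t \<noteq> 0" using sq_ne assms(2) by blast
  have "fst s = 0" using 1 ne by (metis mult_eq_0_iff)
  moreover have "snd s = 0" using 2 ne by (metis mult_eq_0_iff)
  ultimately have "fst s = 0" "snd s = 0" by auto
  then show False using assms(1) by (cases s) (simp add: zero_prod_def)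
qed

context
  fixes I :: "('k::field_char_0 laurent \<Rightarrow> 'k laurent) set"
  assumes I: "lie_ideal I Ham"
begin

lemma I_vs: "vsubspace I" using I by (simp add: lie_ideal_def)

lemma I_zero: "zerovf \<in> I" using I_vs by (simp add: vsubspace_def)

lemma I_add: "theta p \<in> I \<Longrightarrow> theta q \<in> I \<Longrightarrow> theta (p + q) \<in> I"
  using I_vs by (simp add: vsubspace_def theta_add)

lemma I_scale: "theta q \<in> I \<Longrightarrow> theta (cst c * q) \<in> I"
  using I_vs by (simp add: vsubspace_def theta_cst_mult)

lemma I_ad: "theta q \<in> I \<Longrightarrow> theta (theta (mon a) q) \<in> I"
proof -
  assume q: "theta q \<in> I"
  have "theta (mon a) \<in> (Ham :: ('k laurent \<Rightarrow> 'k laurent) set)" by (auto simp: Ham_iff)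
  then have "lie (theta (mon a)) (theta q) \<in> I" using I q unfolding lie_ideal_def by blast
  then show ?thesis by (simp add: lie_theta)
qed

lemma I_iter:
  assumes "finite D" "theta q \<in> I"
  shows "\<exists>q'. theta q' \<in> I \<and> (\<forall>k. Poly_Mapping.lookup q' k = (\<Prod>d\<in>D. - (of_int (pb d k))\<^sup>2) * Poly_Mapping.lookup q k)"
  using assms(1)
proof (induct D rule: finite_induct)
  case empty then show ?case using assms(2) by auto
next
  case (insert d D)
  then obtain q1 where q1: "theta q1 \<in> I" "\<And>k. Poly_Mapping.lookup q1 k = (\<Prod>d\<in>D. - (of_int (pb d k))\<^sup>2) * Poly_Mapping.lookup q k"
    by blast
  define q2 where "q2 = theta (mon (- d)) (theta (mon d) q1)"
  have "theta q2 \<in> I" unfolding q2_def using q1(1) by (intro I_ad)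
  moreover have "Poly_Mapping.lookup q2 k = (\<Prod>d\<in>insert d D. - (of_int (pb d k))\<^sup>2) * Poly_Mapping.lookup q k" for k
  proof -
    have "Poly_Mapping.lookup q2 k = of_int (pb (- d) (k + d)) * (of_int (pb d k) * Poly_Mapping.lookup q1 k)"
      by (simp add: q2_def lookup_theta_mon)
    also have "\<dots> = - (of_int (pb d k))\<^sup>2 * Poly_Mapping.lookup q1 k"
      by (simp add: pb_neg power2_eq_square)
    finally show ?thesis using insert(1,2) q1(2) by (simp add: mult.assoc)
  qed
  ultimately show ?case by blast
qed

lemma I_unscale: "theta (cst c * q) \<in> I \<Longrightarrow> c \<noteq> 0 \<Longrightarrow> theta q \<in> I"
proof -
  assume a: "theta (cst c * q) \<in> I" "c \<noteq> 0"
  have "theta (cst (1 / c) * (cst c * q)) \<in> I" using a(1) by (rule I_scale)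
  then show ?thesis using \<open>c \<noteq> 0\<close> by (simp add: mult.assoc[symmetric] cst_mult_cst cst_one)
qed

lemma I_spread1: "theta (mon b) \<in> I \<Longrightarrow> pb a b \<noteq> 0 \<Longrightarrow> theta (mon (a + b)) \<in> I"
proof -
  assume b: "theta (mon b) \<in> I" and p: "pb a b \<noteq> 0"
  have "theta (cst (of_int (pb a b)) * mon (a + b)) \<in> I"
    using I_ad[OF b, of a] by (simp add: theta_mon_mon)
  moreover have "(of_int (pb a b) :: 'k) \<noteq> 0" using p by simp
  ultimately show ?thesis by (rule I_unscale)
qed

lemma I_spread:
  assumes t: "theta (mon t) \<in> I" "t \<noteq> 0" and s: "s \<noteq> 0"
  shows "theta (mon s) \<in> I"
proof (cases "pb s t = 0")
  case False
  then have "theta (mon ((s - t) + t)) \<in> I" using t(1) by (intro I_spread1) (simp_all add: pb_diff_left)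
  then show ?thesis by simp
next
  case True
  define u where "u = (- snd t, fst t)"
  have "pb (u - t) t = fst t * fst t + snd t * snd t" by (simp add: pb_diff_left u_def pb_def algebra_simps)
  then have "pb (u - t) t \<noteq> 0" using sq_ne[OF t(2)] by simp
  then have "theta (mon ((u - t) + t)) \<in> I" using t(1) by (intro I_spread1)
  then have tu: "theta (mon u) \<in> I" by simp
  have "pb (s - u) u = - (fst s * fst t + snd s * snd t)" by (simp add: pb_diff_left u_def pb_def algebra_simps)
  then have "pb (s - u) u \<noteq> 0" using dot_ne[OF s t(2) True] by simp
  then have "theta (mon ((s - u) + u)) \<in> I" using tu by (intro I_spread1)
  then show ?thesis by simp
qed

end



lemma const_of_keys:
  assumes "\<forall>k\<in>Poly_Mapping.keys g. k = 0"
  shows "g = cst (Poly_Mapping.lookup g 0)"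
proof (rule poly_mapping_eqI)
  fix k show "Poly_Mapping.lookup g k = Poly_Mapping.lookup (cst (Poly_Mapping.lookup g 0)) k"
    using assms by (cases "k = 0") (auto simp: lookup_cst in_keys_iff)
qed

context
  fixes I :: "('k::field_char_0 laurent \<Rightarrow> 'k laurent) set"
  assumes I: "lie_ideal I Ham"
begin

lemma I_mono:
  assumes g: "theta g \<in> I" "theta g \<noteq> zerovf"
  shows "\<exists>t. t \<noteq> 0 \<and> theta (mon t) \<in> I"
proof -
  obtain c0 where c0: "c0 \<in> Poly_Mapping.keys g" "c0 \<noteq> 0"
  proof (rule ccontr)
    assume "\<not> thesis"
    then have "\<forall>k\<in>Poly_Mapping.keys g. k = 0" using that by blast
    then have "g = cst (Poly_Mapping.lookup g 0)" by (rule const_of_keys)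
    then have "theta g = theta (cst (Poly_Mapping.lookup g 0))" by simp
    then have "theta g = zerovf" by (simp only: theta_cst)
    then show False using g(2) by simp
  qed
  define n :: int where "n = 1 + \<bar>snd c0\<bar> + (\<Sum>b\<in>Poly_Mapping.keys g. \<bar>snd b - snd c0\<bar> + \<bar>pb b c0\<bar>)"
  have S0: "0 \<le> (\<Sum>b\<in>Poly_Mapping.keys g. \<bar>snd b - snd c0\<bar> + \<bar>pb b c0\<bar>)" by (rule sum_nonneg) auto
  define a :: "int \<times> int" where "a = (n, n * n)"
  have cond1: "pb a c0 \<noteq> 0"
  proof -
    have "pb a c0 = fst c0 * n^2 + (- snd c0) * n + 0" by (simp add: pb_def a_def power2_eq_square algebra_simps)
    moreover have "fst c0 * n^2 + (- snd c0) * n + 0 \<noteq> 0"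
    proof (rule polyN)
      show "fst c0 \<noteq> 0 \<or> - snd c0 \<noteq> 0" using c0(2) by (cases c0) (auto simp: zero_prod_def)
      show "n > \<bar>- snd c0\<bar> + \<bar>0\<bar>" using S0 by (simp add: n_def)
    qed
    ultimately show ?thesis by simp
  qed
  have cond2: "pb (b + a) (c0 + a) \<noteq> 0" if b: "b \<in> Poly_Mapping.keys g" "b \<noteq> c0" for b
  proof -
    have "pb (b + a) (c0 + a) = (fst c0 - fst b) * n^2 + (snd b - snd c0) * n + pb b c0"
      by (simp add: pb_def a_def power2_eq_square algebra_simps)
    moreover have "(fst c0 - fst b) * n^2 + (snd b - snd c0) * n + pb b c0 \<noteq> 0"
    proof (rule polyN)
      show "fst c0 - fst b \<noteq> 0 \<or> snd b - snd c0 \<noteq> 0" using b(2) by (cases b; cases c0) auto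
      have "\<bar>snd b - snd c0\<bar> + \<bar>pb b c0\<bar> \<le> (\<Sum>b\<in>Poly_Mapping.keys g. \<bar>snd b - snd c0\<bar> + \<bar>pb b c0\<bar>)"
        by (rule member_le_sum) (use b(1) in auto)
      then show "n > \<bar>snd b - snd c0\<bar> + \<bar>pb b c0\<bar>" by (simp add: n_def)
    qed
    ultimately show ?thesis by simp
  qed
  define r where "r = theta (mon a) g"
  have rI: "theta r \<in> I" unfolding r_def using g(1) by (rule I_ad[OF I])
  have lr: "Poly_Mapping.lookup r k = of_int (pb a (k - a)) * Poly_Mapping.lookup g (k - a)" for k
    unfolding r_def by (rule lookup_theta_mon)
  define t where "t = c0 + a"
  have rt: "Poly_Mapping.lookup r t \<noteq> 0"
    using cond1 c0(1) by (simp add: lr t_def in_keys_iff)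
  define D where "D = Poly_Mapping.keys r - {t}"
  have fD: "finite D" by (simp add: D_def)
  obtain q' where q': "theta q' \<in> I" "\<And>k. Poly_Mapping.lookup q' k = (\<Prod>d\<in>D. - (of_int (pb d k))\<^sup>2) * Poly_Mapping.lookup r k"
    using I_iter[OF I fD rI] by blast
  have Dt: "pb d t \<noteq> 0" if "d \<in> D" for d
  proof -
    have d: "d \<in> Poly_Mapping.keys r" "d \<noteq> t" using that by (auto simp: D_def)
    then have "Poly_Mapping.lookup g (d - a) \<noteq> 0" by (simp add: lr in_keys_iff)
    then have "d - a \<in> Poly_Mapping.keys g" by (simp add: in_keys_iff)
    moreover have "d - a \<noteq> c0" using d(2) by (auto simp: t_def)
    ultimately have "pb ((d - a) + a) (c0 + a) \<noteq> 0" by (rule cond2)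
    then show ?thesis by (simp add: t_def)
  qed
  have qt: "Poly_Mapping.lookup q' t \<noteq> 0"
  proof -
    have "(\<Prod>d\<in>D. - (of_int (pb d t))\<^sup>2) \<noteq> (0::'k)"
      using Dt fD by (simp add: prod_zero_iff)
    then show ?thesis using rt by (simp add: q'(2))
  qed
  have qk: "Poly_Mapping.lookup q' k = 0" if "k \<noteq> t" for k
  proof (cases "k \<in> Poly_Mapping.keys r")
    case True
    then have "k \<in> D" using that by (simp add: D_def)
    have "- (of_int (pb k k))\<^sup>2 = (0::'k)" by (simp add: pb_self)
    then have "(\<Prod>d\<in>D. - (of_int (pb d k))\<^sup>2) = (0::'k)"
      by (intro prod_zero[OF fD]) (use \<open>k \<in> D\<close> in blast)
    then show ?thesis by (simp add: q'(2))
  next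
    case False
    then show ?thesis by (simp add: q'(2) in_keys_iff)
  qed
  have "q' = cst (Poly_Mapping.lookup q' t) * mon t"
  proof (rule poly_mapping_eqI)
    fix k show "Poly_Mapping.lookup q' k = Poly_Mapping.lookup (cst (Poly_Mapping.lookup q' t) * mon t) k"
      using qk by (cases "k = t") (auto simp: lookup_mon)
  qed
  then have "theta (cst (Poly_Mapping.lookup q' t) * mon t) \<in> I" using q'(1) by simp
  then have "theta (mon t) \<in> I" using qt by (rule I_unscale[OF I])
  moreover have "t \<noteq> 0"
  proof
    assume "t = 0"
    have "a = t - c0" by (simp add: t_def)
    then have "pb a c0 = pb t c0" by (simp add: pb_diff_left)
    then have "pb a c0 = 0" using \<open>t = 0\<close> by (simp add: pb_def)
    then show False using cond1 by simp
  qed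
  ultimately show ?thesis by blast
qed

lemma I_all:
  assumes g: "theta g \<in> I" "theta g \<noteq> zerovf"
  shows "theta h \<in> I"
proof -
  obtain t where t: "t \<noteq> 0" "theta (mon t) \<in> I" using I_mono[OF g] by blast
  show ?thesis
  proof (induct h rule: laurent_induct)
    case zero then show ?case using I_zero[OF I] by (simp add: theta_zero)
  next
    case (add k c f)
    have "theta (Poly_Mapping.single k c) \<in> I"
    proof (cases "k = 0")
      case True
      then show ?thesis using I_zero[OF I] by (simp add: cst_zero_key[symmetric] theta_cst)
    next
      case False
      then have "theta (mon k) \<in> I" using I_spread[OF I t(2) t(1)] by blast
      then show ?thesis unfolding single_cst_mon by (rule I_scale[OF I])
    qed
    then show ?case using add by (rule I_add[OF I])
  qed
qed

end

lemma simple_Ham: "simple_lie (Ham :: ('k::field_char_0 laurent \<Rightarrow> 'k laurent) set)"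
  unfolding simple_lie_def
proof (intro conjI allI impI)
  show "lie_subalgebra (Ham :: ('k laurent \<Rightarrow> 'k laurent) set)" by (rule lie_subalgebra_Ham)
  obtain u w where uw: "theta (X :: 'k laurent) = lie (theta u) (theta w)" using one_bracket by blast
  have "theta u \<in> (Ham :: ('k laurent \<Rightarrow> 'k laurent) set)" "theta w \<in> (Ham :: ('k laurent \<Rightarrow> 'k laurent) set)"
    by (auto simp: Ham_iff)
  moreover have "lie (theta u) (theta w) \<noteq> (zerovf :: 'k laurent \<Rightarrow> 'k laurent)"
  proof -
    have "theta (X :: 'k laurent) \<noteq> zerovf" by (rule theta_X_nonzero)
    then show ?thesis using uw by simp
  qed
  ultimately show "\<exists>a\<in>(Ham :: ('k laurent \<Rightarrow> 'k laurent) set). \<exists>b\<in>Ham. lie a b \<noteq> zerovf"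
    by blast
  fix I :: "('k laurent \<Rightarrow> 'k laurent) set" assume I: "lie_ideal I Ham"
  show "I = {zerovf} \<or> I = Ham"
  proof (cases "I = {zerovf}")
    case False
    have "zerovf \<in> I" by (rule I_zero[OF I])
    with False obtain x where x: "x \<in> I" "x \<noteq> zerovf" by blast
    have sub: "I \<subseteq> Ham" using I by (simp add: lie_ideal_def)
    have "x \<in> Ham" using sub x(1) by blast
    then obtain g :: "'k laurent" where "x = theta g" by (auto simp: Ham_iff)
    then have "Ham \<subseteq> I" using I_all[OF I] x by (auto simp: Ham_iff)
    then show ?thesis using sub by blast
  qed simp
qed


theorem proposition4p6:
  shows "lie_generated {D \<in> (Vec :: ('k::{alg_closed_field, field_char_0} laurent \<Rightarrow> 'k laurent) set).
             locally_nilpotent D} = {zerovf}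
    \<and> lie_generated {D \<in> (Ham :: ('k laurent \<Rightarrow> 'k laurent) set). locally_nilpotent D} = {zerovf}
    \<and> lie_ideal (Ham :: ('k laurent \<Rightarrow> 'k laurent) set) VP \<and> Ham \<noteq> (VP :: ('k laurent \<Rightarrow> 'k laurent) set)
    \<and> codim_in (Ham :: ('k laurent \<Rightarrow> 'k laurent) set) VP 2
    \<and> (Eom :: ('k laurent \<Rightarrow> 'k laurent) set) = bracket_span Ham Ham
    \<and> bracket_span Ham Ham = (Ham :: ('k laurent \<Rightarrow> 'k laurent) set)
    \<and> simple_lie (Ham :: ('k laurent \<Rightarrow> 'k laurent) set)
    \<and> bracket_width (Ham :: ('k laurent \<Rightarrow> 'k laurent) set) = 1"
  by (simp add: part1a part1b lie_ideal_Ham_VP Ham_ne_VP codim Eom_Ham bracket_span_Ham simple_Ham width)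

end
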